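(* Let $\Gamma$ be a group acting by homeomorphisms on a Hausdorff topological space $\Omega$. Assume the action is strongly hyperbolic on $\Omega$ and strongly faithful on $L_\Gamma$. Then: (i) every non-empty closed $\Gamma$-invariant subset of $\Omega$ contains $\overline{L_\Gamma}$. Let moreover $N$ be a normal subgroup of $\Gamma$ containing a hyperbolic homeomorphism. Then: (ii) $\overline{L_N}=\overline{L_\Gamma}$; (iii) $N$ is a Powers group.
   Context: A homeomorphism $\gamma$ of $\Omega$ is hyperbolic if there are two points $\alpha(\gamma),\omega(\gamma)\in\Omega$ fixed by $\gamma$ such that for all neighbourhoods $U$ of $\alpha(\gamma)$ and $V$ of $\omega(\gamma)$ one has $\gamma^n(\Omega\setminus U)\subset V$ and $\gamma^{-n}(\Omega\setminus V)\subset U$ for all large $n$. Two hyperbolic homeomorphisms are transverse if they have no common fixed point; an action is strongly hyperbolic if the group contains two transverse hyperbolic homeomorphisms. For a group $\Lambda$ of homeomorphisms, $L_\Lambda=\{\eta\in\Omega\mid \eta=\omega(\gamma)\text{ for some hyperbolic }\gamma\in\Lambda\}$. An action on a set $X$ is strongly faithful if for every finite subset $F$ of the group not containing $1$ there is $x\in X$ with $\gamma(x)\neq x$ for all $\gamma\in F$. A group $N\neq\{1\}$ is a Powers group if for every finite $F\subset N\setminus\{1\}$ and integer $k\ge1$ there are a partition $N=C\sqcup D$ and $\gamma_1,\dots,\gamma_k\in N$ with $fC\cap C=\emptyset$ ($f\in F$) and $\gamma_iD\cap\gamma_jD=\emptyset$ ($i\ne j$). *)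

theory Defs
  imports "HOL-Analysis.Analysis" "HOL-Algebra.Group_Action"
begin

definition hyperbolic_with :: "('a::topological_space \<Rightarrow> 'a) \<Rightarrow> 'a \<Rightarrow> 'a \<Rightarrow> bool" where
  "hyperbolic_with f a w \<longleftrightarrow> f a = a \<and> f w = w \<and>
     (\<forall>U V. open U \<longrightarrow> a \<in> U \<longrightarrow> open V \<longrightarrow> w \<in> V \<longrightarrow>
        (\<exists>n0. \<forall>n\<ge>n0. (f ^^ n) ` (UNIV - U) \<subseteq> V \<and> (inv_into UNIV f ^^ n) ` (UNIV - V) \<subseteq> U))"

definition hyperbolic :: "('a::topological_space \<Rightarrow> 'a) \<Rightarrow> bool" where
  "hyperbolic f \<longleftrightarrow> (\<exists>a w. hyperbolic_with f a w)"

definition transverse :: "('a \<Rightarrow> 'a) \<Rightarrow> ('a \<Rightarrow> 'a) \<Rightarrow> bool" where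
  "transverse f g \<longleftrightarrow> \<not> (\<exists>x. f x = x \<and> g x = x)"

definition limset :: "('a::topological_space \<Rightarrow> 'a) set \<Rightarrow> 'a set" where
  "limset \<Lambda> = {\<eta>. \<exists>f\<in>\<Lambda>. \<exists>a. hyperbolic_with f a \<eta>}"

definition homeo_action :: "('g, 'm) monoid_scheme \<Rightarrow> ('g \<Rightarrow> 'a::topological_space \<Rightarrow> 'a) \<Rightarrow> bool" where
  "homeo_action G \<phi> \<longleftrightarrow> group_action G UNIV \<phi> \<and> (\<forall>g\<in>carrier G. continuous_on UNIV (\<phi> g))"

definition strongly_hyperbolic :: "('g, 'm) monoid_scheme \<Rightarrow> ('g \<Rightarrow> 'a::topological_space \<Rightarrow> 'a) \<Rightarrow> bool" where
  "strongly_hyperbolic G \<phi> \<longleftrightarrow> (\<exists>g\<in>carrier G. \<exists>h\<in>carrier G.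
      hyperbolic (\<phi> g) \<and> hyperbolic (\<phi> h) \<and> transverse (\<phi> g) (\<phi> h))"

definition strongly_faithful_on :: "('g, 'm) monoid_scheme \<Rightarrow> ('g \<Rightarrow> 'a \<Rightarrow> 'a) \<Rightarrow> 'a set \<Rightarrow> bool" where
  "strongly_faithful_on G \<phi> X \<longleftrightarrow> (\<forall>F. finite F \<longrightarrow> F \<subseteq> carrier G - {\<one>\<^bsub>G\<^esub>} \<longrightarrow>
      (\<exists>x\<in>X. \<forall>g\<in>F. \<phi> g x \<noteq> x))"

definition powers_group :: "('g, 'm) monoid_scheme \<Rightarrow> bool" where
  "powers_group H \<longleftrightarrow> carrier H \<noteq> {\<one>\<^bsub>H\<^esub>} \<and>
     (\<forall>F (k::nat). finite F \<longrightarrow> F \<subseteq> carrier H - {\<one>\<^bsub>H\<^esub>} \<longrightarrow> k \<ge> 1 \<longrightarrow>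
       (\<exists>C D (\<gamma>::nat \<Rightarrow> 'g). C \<union> D = carrier H \<and> C \<inter> D = {} \<and>
          (\<forall>f\<in>F. (f <#\<^bsub>H\<^esub> C) \<inter> C = {}) \<and>
          (\<forall>i\<in>{1..k}. \<gamma> i \<in> carrier H) \<and>
          (\<forall>i\<in>{1..k}. \<forall>j\<in>{1..k}. i \<noteq> j \<longrightarrow> (\<gamma> i <#\<^bsub>H\<^esub> D) \<inter> (\<gamma> j <#\<^bsub>H\<^esub> D) = {})))"

end

theory Submission
  imports Defs
begin

definition fwd :: "('a::topological_space \<Rightarrow> 'a) \<Rightarrow> 'a \<Rightarrow> 'a \<Rightarrow> bool" where
  "fwd f a w \<longleftrightarrow> (\<forall>U V. open U \<longrightarrow> a \<in> U \<longrightarrow> open V \<longrightarrow> w \<in> V \<longrightarrow>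
        (\<exists>n0. \<forall>n\<ge>n0. (f ^^ n) ` (UNIV - U) \<subseteq> V))"

lemma hyp_fwd: "hyperbolic_with f a w \<Longrightarrow> fwd f a w"
  unfolding hyperbolic_with_def fwd_def by meson

lemma hyp_fwd_inv: "hyperbolic_with f a w \<Longrightarrow> fwd (inv_into UNIV f) w a"
  unfolding hyperbolic_with_def fwd_def by meson

lemma hyp_fix: "hyperbolic_with f a w \<Longrightarrow> f a = a \<and> f w = w"
  unfolding hyperbolic_with_def by simp

lemma hyp_intro:
  assumes "f a = a" "f w = w" "fwd f a w" "fwd (inv_into UNIV f) w a"
  shows "hyperbolic_with f a w"
  unfolding hyperbolic_with_def
proof (intro conjI allI impI)
  fix U V :: "'a set" assume h: "open U" "a \<in> U" "open V" "w \<in> V"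
  obtain n1 where n1: "\<forall>n\<ge>n1. (f ^^ n) ` (UNIV - U) \<subseteq> V"
    using assms(3) h unfolding fwd_def by blast
  obtain n2 where n2: "\<forall>n\<ge>n2. (inv_into UNIV f ^^ n) ` (UNIV - V) \<subseteq> U"
    using assms(4) h unfolding fwd_def by blast
  show "\<exists>n0. \<forall>n\<ge>n0. (f ^^ n) ` (UNIV - U) \<subseteq> V \<and> (inv_into UNIV f ^^ n) ` (UNIV - V) \<subseteq> U"
    by (rule exI[of _ "max n1 n2"]) (use n1 n2 in auto)
qed (use assms in auto)

lemma funpow_conj:
  assumes "\<And>y. Q (P y) = y" "\<And>y. P (Q y) = y"
  shows "((\<lambda>y. P (f (Q y))) ^^ n) = (\<lambda>y. P ((f ^^ n) (Q y)))"
proof (induction n)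
  case 0 then show ?case using assms by auto
next
  case (Suc n) then show ?case using assms by auto
qed

lemma fwd_conj:
  fixes P Q :: "'a::topological_space \<Rightarrow> 'a"
  assumes QP: "\<And>y. Q (P y) = y" and PQ: "\<And>y. P (Q y) = y" and cP: "continuous_on UNIV P"
    and f: "fwd f a w"
  shows "fwd (\<lambda>y. P (f (Q y))) (P a) (P w)"
  unfolding fwd_def
proof (intro allI impI)
  fix U V :: "'a set" assume h: "open U" "P a \<in> U" "open V" "P w \<in> V"
  have oU: "open (P -` U)" and oV: "open (P -` V)"
    using cP h continuous_on_open_vimage[of UNIV P] by auto
  obtain n0 where n0: "\<forall>n\<ge>n0. (f ^^ n) ` (UNIV - P -` U) \<subseteq> P -` V"
    using f oU oV h unfolding fwd_def by (metis vimageI2)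
  show "\<exists>n0. \<forall>n\<ge>n0. ((\<lambda>y. P (f (Q y))) ^^ n) ` (UNIV - U) \<subseteq> V"
  proof (rule exI[of _ n0], intro allI impI subsetI)
    fix n z assume n: "n \<ge> n0" and z: "z \<in> ((\<lambda>y. P (f (Q y))) ^^ n) ` (UNIV - U)"
    then obtain y where y: "y \<notin> U" "z = P ((f ^^ n) (Q y))"
      unfolding funpow_conj[where P=P and Q=Q, OF QP PQ] by auto
    have "Q y \<in> UNIV - P -` U" using y PQ by auto
    then show "z \<in> V" using n0 n y by blast
  qed
qed

lemma inv_conj:
  assumes "bij f" "\<And>y. Q (P y) = y" "\<And>y. P (Q y) = y"
  shows "inv_into UNIV (\<lambda>y. P (f (Q y))) = (\<lambda>y. P (inv_into UNIV f (Q y)))"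
  by (rule inv_equality) (use assms in \<open>auto simp: bij_is_inj bij_is_surj surj_f_inv_f\<close>)

lemma fwd_no_period2:
  fixes f :: "'a::t2_space \<Rightarrow> 'a"
  assumes "fwd f a w" "c \<noteq> a" "c \<noteq> w"
  shows "f (f c) \<noteq> c"
proof
  assume ff: "f (f c) = c"
  have per: "(f ^^ (2*j)) c = c" for j
    by (induction j) (auto simp: ff)
  obtain U where U: "open U" "a \<in> U" "c \<notin> U" using t1_space assms(2) by metis
  obtain V where V: "open V" "w \<in> V" "c \<notin> V" using t1_space assms(3) by metis
  obtain n0 where "\<forall>n\<ge>n0. (f ^^ n) ` (UNIV - U) \<subseteq> V" using assms(1) U V unfolding fwd_def by blast
  then have "(f ^^ (2*n0)) ` (UNIV - U) \<subseteq> V" by simp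
  then have "(f ^^ (2*n0)) c \<in> V" using U by blast
  then show False using per V by simp
qed

lemma act_comp:
  assumes "homeo_action G \<phi>" "g \<in> carrier G" "h \<in> carrier G"
  shows "\<phi> (g \<otimes>\<^bsub>G\<^esub> h) y = \<phi> g (\<phi> h y)"
proof -
  interpret group_action G UNIV \<phi> using assms(1) unfolding homeo_action_def by blast
  show ?thesis using composition_rule[of y g h] assms by simp
qed

lemma act_one:
  assumes "homeo_action G \<phi>"
  shows "\<phi> \<one>\<^bsub>G\<^esub> y = y"
proof -
  interpret group_action G UNIV \<phi> using assms(1) unfolding homeo_action_def by blast
  show ?thesis using id_eq_one by (metis UNIV_I restrict_apply')
qed

lemma act_bij:
  assumes "homeo_action G \<phi>" "g \<in> carrier G"
  shows "bij (\<phi> g)"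
proof -
  interpret group_action G UNIV \<phi> using assms(1) unfolding homeo_action_def by blast
  show ?thesis using bij_prop0[OF assms(2)] unfolding Bij_def by simp
qed

lemma act_cont:
  assumes "homeo_action G \<phi>" "g \<in> carrier G"
  shows "continuous_on UNIV (\<phi> g)"
  using assms unfolding homeo_action_def by blast

lemma act_inv:
  assumes "group G" "homeo_action G \<phi>" "g \<in> carrier G"
  shows "\<phi> (inv\<^bsub>G\<^esub> g) (\<phi> g y) = y" "\<phi> g (\<phi> (inv\<^bsub>G\<^esub> g) y) = y"
proof -
  interpret group G by fact
  show "\<phi> (inv\<^bsub>G\<^esub> g) (\<phi> g y) = y"
    using act_comp[OF assms(2), of "inv\<^bsub>G\<^esub> g" g y] act_one[OF assms(2)] assms(3) by simp
  show "\<phi> g (\<phi> (inv\<^bsub>G\<^esub> g) y) = y"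
    using act_comp[OF assms(2), of g "inv\<^bsub>G\<^esub> g" y] act_one[OF assms(2)] assms(3) by simp
qed

lemma act_pow:
  assumes "group G" "homeo_action G \<phi>" "h \<in> carrier G"
  shows "\<phi> (h [^]\<^bsub>G\<^esub> (n::nat)) = (\<phi> h) ^^ n"
proof (induction n)
  case 0 then show ?case using act_one[OF assms(2)] by auto
next
  case (Suc n)
  interpret group G by fact
  have hc: "h [^]\<^bsub>G\<^esub> n \<in> carrier G" using assms(3) by (rule nat_pow_closed)
  show ?case
  proof
    fix y
    have "\<phi> (h [^]\<^bsub>G\<^esub> Suc n) y = \<phi> (h [^]\<^bsub>G\<^esub> n \<otimes>\<^bsub>G\<^esub> h) y"
      by (simp only: nat_pow_Suc)
    also have "\<dots> = \<phi> (h [^]\<^bsub>G\<^esub> n) (\<phi> h y)"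
      by (rule act_comp[OF assms(2) hc assms(3)])
    also have "\<dots> = (\<phi> h ^^ n) (\<phi> h y)" by (simp only: Suc)
    also have "\<dots> = (\<phi> h ^^ Suc n) y" by (simp only: funpow_Suc_right o_apply)
    finally show "\<phi> (h [^]\<^bsub>G\<^esub> Suc n) y = (\<phi> h ^^ Suc n) y" .
  qed
qed

lemma act_conj_hyp:
  assumes "group G" "homeo_action G \<phi>" "g \<in> carrier G" "n \<in> carrier G"
    and hyp: "hyperbolic_with (\<phi> n) a b"
  shows "hyperbolic_with (\<phi> (g \<otimes>\<^bsub>G\<^esub> n \<otimes>\<^bsub>G\<^esub> inv\<^bsub>G\<^esub> g)) (\<phi> g a) (\<phi> g b)"
proof -
  interpret group G by fact
  let ?P = "\<phi> g" and ?Q = "\<phi> (inv\<^bsub>G\<^esub> g)" and ?f = "\<phi> n"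
  have QP: "\<And>y. ?Q (?P y) = y" by (rule act_inv(1)[OF assms(1,2,3)])
  have PQ: "\<And>y. ?P (?Q y) = y" by (rule act_inv(2)[OF assms(1,2,3)])
  have gn: "g \<otimes>\<^bsub>G\<^esub> n \<in> carrier G" using assms(3,4) by (rule m_closed)
  have ig: "inv\<^bsub>G\<^esub> g \<in> carrier G" using assms(3) by (rule inv_closed)
  have eq: "\<phi> (g \<otimes>\<^bsub>G\<^esub> n \<otimes>\<^bsub>G\<^esub> inv\<^bsub>G\<^esub> g) = (\<lambda>y. ?P (?f (?Q y)))"
  proof
    fix y show "\<phi> (g \<otimes>\<^bsub>G\<^esub> n \<otimes>\<^bsub>G\<^esub> inv\<^bsub>G\<^esub> g) y = ?P (?f (?Q y))"
      using act_comp[OF assms(2) gn ig, of y] act_comp[OF assms(2) assms(3,4)] by simp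
  qed
  have bf: "bij ?f" by (rule act_bij[OF assms(2,4)])
  have cP: "continuous_on UNIV ?P" by (rule act_cont[OF assms(2,3)])
  have fx: "?f a = a" "?f b = b" using hyp_fix[OF hyp] by auto
  show ?thesis unfolding eq
  proof (rule hyp_intro)
    show "?P (?f (?Q (?P a))) = ?P a" "?P (?f (?Q (?P b))) = ?P b" using QP fx by auto
    show "fwd (\<lambda>y. ?P (?f (?Q y))) (?P a) (?P b)"
      by (rule fwd_conj[OF QP PQ cP hyp_fwd[OF hyp]])
    have h2: "fwd (inv_into UNIV ?f) b a" using hyp by (rule hyp_fwd_inv)
    show "fwd (inv_into UNIV (\<lambda>y. ?P (?f (?Q y)))) (?P b) (?P a)"
      unfolding inv_conj[OF bf QP PQ] by (rule fwd_conj[OF QP PQ cP h2])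
  qed
qed

lemma move_exists:
  fixes \<phi> :: "'g \<Rightarrow> 'a::t2_space \<Rightarrow> 'a"
  assumes "group G" "homeo_action G \<phi>" "strongly_hyperbolic G \<phi>"
  shows "\<exists>t\<in>carrier G. \<phi> t c \<noteq> c \<and> \<phi> t (\<phi> t c) \<noteq> c \<and> \<phi> t (\<phi> t c) \<noteq> \<phi> t c"
proof -
  obtain g h where gh: "g \<in> carrier G" "h \<in> carrier G" "hyperbolic (\<phi> g)" "hyperbolic (\<phi> h)"
    "transverse (\<phi> g) (\<phi> h)" using assms(3) unfolding strongly_hyperbolic_def by blast
  have key: "\<phi> t (\<phi> t c) \<noteq> c \<and> \<phi> t (\<phi> t c) \<noteq> \<phi> t c"
    if t: "t \<in> carrier G" "hyperbolic (\<phi> t)" "\<phi> t c \<noteq> c" for t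
  proof -
    obtain a w where hw: "hyperbolic_with (\<phi> t) a w" using t(2) unfolding hyperbolic_def by blast
    have "c \<noteq> a" "c \<noteq> w" using hyp_fix[OF hw] t(3) by auto
    then have 1: "\<phi> t (\<phi> t c) \<noteq> c" using fwd_no_period2[OF hyp_fwd[OF hw]] by blast
    have "inj (\<phi> t)" using act_bij[OF assms(2) t(1)] bij_is_inj by blast
    then have 2: "\<phi> t (\<phi> t c) \<noteq> \<phi> t c" using t(3) by (metis injD)
    show ?thesis using 1 2 by blast
  qed
  show ?thesis
  proof (cases "\<phi> g c = c")
    case True
    then have "\<phi> h c \<noteq> c" using gh(5) unfolding transverse_def by blast
    then show ?thesis using key[OF gh(2,4)] gh(2) by blast
  next
    case False
    then show ?thesis using key[OF gh(1,3)] gh(1) by blast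
  qed
qed

lemma avoid_two:
  fixes \<phi> :: "'g \<Rightarrow> 'a::t2_space \<Rightarrow> 'a"
  assumes "group G" "homeo_action G \<phi>" "strongly_hyperbolic G \<phi>"
  shows "\<exists>r\<in>carrier G. \<phi> r c \<noteq> a0 \<and> \<phi> r c \<noteq> b0"
proof -
  interpret group G by fact
  obtain t where t: "t \<in> carrier G" "\<phi> t c \<noteq> c" "\<phi> t (\<phi> t c) \<noteq> c" "\<phi> t (\<phi> t c) \<noteq> \<phi> t c"
    using move_exists[OF assms] by blast
  have tt: "t \<otimes>\<^bsub>G\<^esub> t \<in> carrier G" using t(1) by simp
  have e1: "\<phi> \<one>\<^bsub>G\<^esub> c = c" by (rule act_one[OF assms(2)])
  have e2: "\<phi> (t \<otimes>\<^bsub>G\<^esub> t) c = \<phi> t (\<phi> t c)" by (rule act_comp[OF assms(2) t(1) t(1)])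
  show ?thesis
  proof (cases "c \<noteq> a0 \<and> c \<noteq> b0")
    case True then show ?thesis using e1 one_closed by metis
  next
    case c: False
    show ?thesis
    proof (cases "\<phi> t c \<noteq> a0 \<and> \<phi> t c \<noteq> b0")
      case True then show ?thesis using t(1) by blast
    next
      case False
      then have "\<phi> t (\<phi> t c) \<noteq> a0 \<and> \<phi> t (\<phi> t c) \<noteq> b0" using c t by metis
      then show ?thesis using e2 tt by metis
    qed
  qed
qed

lemma part_i:
  fixes \<phi> :: "'g \<Rightarrow> 'a::t2_space \<Rightarrow> 'a"
  assumes "group G" "homeo_action G \<phi>" "strongly_hyperbolic G \<phi>"
    and C: "closed C" "C \<noteq> {}" "\<forall>g\<in>carrier G. \<phi> g ` C \<subseteq> C"
  shows "closure (limset (\<phi> ` carrier G)) \<subseteq> C"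
proof (rule closure_minimal[OF _ C(1)])
  show "limset (\<phi> ` carrier G) \<subseteq> C"
  proof
    fix \<eta> assume "\<eta> \<in> limset (\<phi> ` carrier G)"
    then obtain \<gamma> \<alpha> where g: "\<gamma> \<in> carrier G" "hyperbolic_with (\<phi> \<gamma>) \<alpha> \<eta>"
      unfolding limset_def by blast
    obtain y where y: "y \<in> C" using C(2) by blast
    obtain z where z: "z \<in> C" "z \<noteq> \<alpha>"
    proof (cases "y = \<alpha>")
      case True
      obtain t where "t \<in> carrier G" "\<phi> t y \<noteq> y" using move_exists[OF assms(1-3)] by blast
      moreover have "\<phi> t y \<in> C" if "t \<in> carrier G" using C(3) y that by blast
      ultimately show ?thesis using that True by blast
    next
      case False then show ?thesis using that y by blast
    qed
    have it: "(\<phi> \<gamma> ^^ n) z \<in> C" for n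
    proof (induction n)
      case 0 then show ?case using z by simp
    next
      case (Suc n) then show ?case using C(3) g(1) by auto
    qed
    show "\<eta> \<in> C"
    proof (rule ccontr)
      assume ne: "\<eta> \<notin> C"
      obtain U where U: "open U" "\<alpha> \<in> U" "z \<notin> U" using t1_space z(2) by metis
      have oV: "open (- C)" using C(1) by auto
      obtain n0 where "\<forall>n\<ge>n0. (\<phi> \<gamma> ^^ n) ` (UNIV - U) \<subseteq> - C"
        using hyp_fwd[OF g(2)] U oV ne unfolding fwd_def by blast
      then have "(\<phi> \<gamma> ^^ n0) z \<in> - C" using U(3) by blast
      then show False using it by blast
    qed
  qed
qed

lemma limset_conj:
  fixes \<phi> :: "'g \<Rightarrow> 'a::t2_space \<Rightarrow> 'a"
  assumes "group G" "homeo_action G \<phi>" "N \<lhd> G" "g \<in> carrier G" "\<eta> \<in> limset (\<phi> ` N)"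
  shows "\<phi> g \<eta> \<in> limset (\<phi> ` N)"
proof -
  interpret group G by fact
  obtain n \<alpha> where n: "n \<in> N" "hyperbolic_with (\<phi> n) \<alpha> \<eta>"
    using assms(5) unfolding limset_def by blast
  have nc: "n \<in> carrier G" using subgroup.mem_carrier[OF normal_imp_subgroup[OF assms(3)] n(1)] .
  have "g \<otimes>\<^bsub>G\<^esub> n \<otimes>\<^bsub>G\<^esub> inv\<^bsub>G\<^esub> g \<in> N"
    using normal.inv_op_closed2[OF assms(3) assms(4) n(1)] .
  moreover have "hyperbolic_with (\<phi> (g \<otimes>\<^bsub>G\<^esub> n \<otimes>\<^bsub>G\<^esub> inv\<^bsub>G\<^esub> g)) (\<phi> g \<alpha>) (\<phi> g \<eta>)"
    by (rule act_conj_hyp[OF assms(1,2,4) nc n(2)])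
  ultimately show ?thesis unfolding limset_def by blast
qed

lemma part_ii:
  fixes \<phi> :: "'g \<Rightarrow> 'a::t2_space \<Rightarrow> 'a"
  assumes "group G" "homeo_action G \<phi>" "strongly_hyperbolic G \<phi>" "N \<lhd> G"
    and hn: "n0 \<in> N" "hyperbolic (\<phi> n0)"
  shows "closure (limset (\<phi> ` N)) = closure (limset (\<phi> ` carrier G))"
proof
  have Nc: "N \<subseteq> carrier G" using subgroup.subset[OF normal_imp_subgroup[OF assms(4)]] .
  show "closure (limset (\<phi> ` N)) \<subseteq> closure (limset (\<phi> ` carrier G))"
  proof (rule closure_mono)
    show "limset (\<phi> ` N) \<subseteq> limset (\<phi> ` carrier G)"
      unfolding limset_def using Nc by auto
  qed
  let ?L = "limset (\<phi> ` N)"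
  show "closure (limset (\<phi> ` carrier G)) \<subseteq> closure ?L"
  proof (rule part_i[OF assms(1-3)])
    show "closed (closure ?L)" by simp
    obtain a w where "hyperbolic_with (\<phi> n0) a w" using hn(2) unfolding hyperbolic_def by blast
    then have "w \<in> ?L" using hn(1) unfolding limset_def by blast
    then show "closure ?L \<noteq> {}" using closure_subset by blast
    show "\<forall>g\<in>carrier G. \<phi> g ` closure ?L \<subseteq> closure ?L"
    proof
      fix g assume g: "g \<in> carrier G"
      show "\<phi> g ` closure ?L \<subseteq> closure ?L"
      proof (rule image_closure_subset)
        show "continuous_on (closure ?L) (\<phi> g)"
          using continuous_on_subset[OF act_cont[OF assms(2) g]] by simp
        show "closed (closure ?L)" by simp
        show "\<phi> g ` ?L \<subseteq> closure ?L"
          using limset_conj[OF assms(1,2,4) g] closure_subset by blast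
      qed
    qed
  qed
qed

lemma fwd_fixall:
  fixes f :: "'a::t2_space \<Rightarrow> 'a"
  assumes "fwd f a w" "\<forall>y. f y = y"
  shows "z = a \<or> z = w"
proof (rule ccontr)
  assume "\<not> (z = a \<or> z = w)"
  then have za: "z \<noteq> a" and zw: "z \<noteq> w" by auto
  obtain U where U: "open U" "a \<in> U" "z \<notin> U" using t1_space za by metis
  obtain V where V: "open V" "w \<in> V" "z \<notin> V" using t1_space zw by metis
  obtain n0 where "\<forall>n\<ge>n0. (f ^^ n) ` (UNIV - U) \<subseteq> V" using assms(1) U V unfolding fwd_def by blast
  then have "(f ^^ n0) z \<in> V" using U by blast
  moreover have "(f ^^ n) z = z" for n by (induction n) (use assms(2) in auto)
  ultimately show False using V by simp
qed

lemma subgroup_pow_closed: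
  assumes "group G" "subgroup N G" "h \<in> N"
  shows "h [^]\<^bsub>G\<^esub> (n::nat) \<in> N"
proof (induction n)
  case 0 then show ?case using subgroup.one_closed[OF assms(2)] by simp
next
  case (Suc n)
  interpret group G by fact
  have "h [^]\<^bsub>G\<^esub> Suc n = h [^]\<^bsub>G\<^esub> n \<otimes>\<^bsub>G\<^esub> h" by (rule nat_pow_Suc)
  then show ?case using subgroup.m_closed[OF assms(2) Suc assms(3)] by simp
qed

lemma part_iii:
  fixes \<phi> :: "'g \<Rightarrow> 'a::t2_space \<Rightarrow> 'a"
  assumes grp: "group G" and ha: "homeo_action G \<phi>" and sh: "strongly_hyperbolic G \<phi>"
    and sf: "strongly_faithful_on G \<phi> (limset (\<phi> ` carrier G))"
    and nor: "N \<lhd> G" and hn: "n0 \<in> N" "hyperbolic (\<phi> n0)"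
  shows "powers_group (G\<lparr>carrier := N\<rparr>)"
proof -
  interpret group G by fact
  have sub: "subgroup N G" by (rule normal_imp_subgroup[OF nor])
  have Nc: "N \<subseteq> carrier G" using subgroup.subset[OF sub] .
  obtain a0 b0 where hn0: "hyperbolic_with (\<phi> n0) a0 b0" using hn(2) unfolding hyperbolic_def by blast
  have n0c: "n0 \<in> carrier G" using hn(1) Nc by blast
  have nontriv: "N \<noteq> {\<one>\<^bsub>G\<^esub>}"
  proof
    assume "N = {\<one>\<^bsub>G\<^esub>}"
    then have "n0 = \<one>\<^bsub>G\<^esub>" using hn(1) by blast
    then have idf: "\<forall>y. \<phi> n0 y = y" using act_one[OF ha] by simp
    obtain t where t: "t \<in> carrier G" "\<phi> t a0 \<noteq> a0" "\<phi> t (\<phi> t a0) \<noteq> a0" "\<phi> t (\<phi> t a0) \<noteq> \<phi> t a0"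
      using move_exists[OF grp ha sh] by blast
    have "\<phi> t a0 = a0 \<or> \<phi> t a0 = b0" "\<phi> t (\<phi> t a0) = a0 \<or> \<phi> t (\<phi> t a0) = b0"
      using fwd_fixall[OF hyp_fwd[OF hn0] idf] by blast+
    then show False using t by auto
  qed
  have main: "\<exists>C D (\<gamma>::nat \<Rightarrow> 'g). C \<union> D = N \<and> C \<inter> D = {} \<and>
          (\<forall>f\<in>F. \<forall>c\<in>C. f \<otimes>\<^bsub>G\<^esub> c \<notin> C) \<and>
          (\<forall>i\<in>{1..k}. \<gamma> i \<in> N) \<and>
          (\<forall>i\<in>{1..k}. \<forall>j\<in>{1..k}. i \<noteq> j \<longrightarrow> (\<forall>d1\<in>D. \<forall>d2\<in>D. \<gamma> i \<otimes>\<^bsub>G\<^esub> d1 \<noteq> \<gamma> j \<otimes>\<^bsub>G\<^esub> d2))"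
    if F: "finite F" "F \<subseteq> N - {\<one>\<^bsub>G\<^esub>}" for F and k :: nat
  proof -
    have F': "F \<subseteq> carrier G - {\<one>\<^bsub>G\<^esub>}" using F Nc by blast
    obtain x where x: "x \<in> limset (\<phi> ` carrier G)" "\<forall>f\<in>F. \<phi> f x \<noteq> x"
      using sf F(1) F' unfolding strongly_faithful_on_def by blast
    have sep: "\<forall>f\<in>F. \<exists>A B. open A \<and> open B \<and> x \<in> A \<and> \<phi> f x \<in> B \<and> A \<inter> B = {}"
      using x(2) hausdorff by metis
    then obtain A B where AB: "\<forall>f\<in>F. open (A f) \<and> open (B f) \<and> x \<in> A f \<and> \<phi> f x \<in> B f \<and> A f \<inter> B f = {}"
      by metis
    define U where "U = (\<Inter>f\<in>F. A f \<inter> \<phi> f -` B f)"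
    have oU: "open U" unfolding U_def
    proof (rule open_INT[OF F(1)], intro ballI open_Int)
      fix f assume f: "f \<in> F"
      show "open (A f)" using AB f by blast
      have "continuous_on UNIV (\<phi> f)" using act_cont[OF ha] f F' by blast
      then show "open (\<phi> f -` B f)" using AB f continuous_on_open_vimage[of UNIV "\<phi> f"] by auto
    qed
    have xU: "x \<in> U" unfolding U_def using AB by auto
    have Udisj: "\<phi> f y \<notin> U" if "f \<in> F" "y \<in> U" for f y
    proof
      assume "\<phi> f y \<in> U"
      then have "\<phi> f y \<in> A f" unfolding U_def using that(1) by blast
      moreover have "\<phi> f y \<in> B f" using that unfolding U_def by blast
      ultimately show False using AB that(1) by blast
    qed
    obtain s c where s: "s \<in> carrier G" "hyperbolic_with (\<phi> s) c x"
      using x(1) unfolding limset_def by blast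
    obtain r where r: "r \<in> carrier G" "\<phi> r c \<noteq> a0" "\<phi> r c \<noteq> b0"
      using avoid_two[OF grp ha sh] by blast
    define ri where "ri = inv\<^bsub>G\<^esub> r"
    have ric: "ri \<in> carrier G" unfolding ri_def using r(1) by simp
    have rr: "\<phi> r (\<phi> ri y) = y" for y unfolding ri_def by (rule act_inv(2)[OF grp ha r(1)])
    have p1: "\<phi> ri a0 \<noteq> c" using rr[of a0] r(2) by auto
    have p2: "\<phi> ri b0 \<noteq> c" using rr[of b0] r(3) by auto
    obtain U1 where U1: "open U1" "c \<in> U1" "\<phi> ri a0 \<notin> U1" using t1_space p1 by metis
    obtain U2 where U2: "open U2" "c \<in> U2" "\<phi> ri b0 \<notin> U2" using t1_space p2 by metis
    obtain m where m: "\<forall>n\<ge>m. (\<phi> s ^^ n) ` (UNIV - (U1 \<inter> U2)) \<subseteq> U"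
      using hyp_fwd[OF s(2)] U1 U2 oU xU unfolding fwd_def by (metis IntI open_Int)
    then have mm: "(\<phi> s ^^ m) ` (UNIV - (U1 \<inter> U2)) \<subseteq> U" by blast
    have q1: "(\<phi> s ^^ m) (\<phi> ri a0) \<in> U" using mm U1(3) by blast
    have q2: "(\<phi> s ^^ m) (\<phi> ri b0) \<in> U" using mm U2(3) by blast
    define g where "g = s [^]\<^bsub>G\<^esub> m \<otimes>\<^bsub>G\<^esub> ri"
    have smc: "s [^]\<^bsub>G\<^esub> m \<in> carrier G" using s(1) by simp
    have gc: "g \<in> carrier G" unfolding g_def using smc ric by simp
    have phig: "\<phi> g y = (\<phi> s ^^ m) (\<phi> ri y)" for y
      unfolding g_def act_comp[OF ha smc ric] act_pow[OF grp ha s(1)] ..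
    define h where "h = g \<otimes>\<^bsub>G\<^esub> n0 \<otimes>\<^bsub>G\<^esub> inv\<^bsub>G\<^esub> g"
    have hN: "h \<in> N" unfolding h_def by (rule normal.inv_op_closed2[OF nor gc hn(1)])
    have hc: "h \<in> carrier G" using hN Nc by blast
    have hh: "hyperbolic_with (\<phi> h) (\<phi> g a0) (\<phi> g b0)"
      unfolding h_def by (rule act_conj_hyp[OF grp ha gc n0c hn0])
    have ga: "\<phi> g a0 \<in> U" "\<phi> g b0 \<in> U" using q1 q2 phig by auto
    obtain n1 where n1: "\<forall>n\<ge>n1. (\<phi> h ^^ n) ` (UNIV - U) \<subseteq> U"
      using hyp_fwd[OF hh] oU ga unfolding fwd_def by blast
    define e where "e = Suc n1"
    define \<gamma> where "\<gamma> = (\<lambda>i::nat. h [^]\<^bsub>G\<^esub> (i * e))"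
    have \<gamma>N: "\<gamma> i \<in> N" for i unfolding \<gamma>_def by (rule subgroup_pow_closed[OF grp sub hN])
    have \<gamma>c: "\<gamma> i \<in> carrier G" for i using \<gamma>N Nc by blast
    have phiga: "\<phi> (\<gamma> i) = \<phi> h ^^ (i * e)" for i unfolding \<gamma>_def by (rule act_pow[OF grp ha hc])
    have injh: "inj (\<phi> h ^^ n)" for n using act_bij[OF ha hc] bij_is_inj inj_fn by blast
    have key: False if ij: "i < j" and y: "y1 \<notin> U" "y2 \<notin> U"
      and eq: "(\<phi> h ^^ (i * e)) y1 = (\<phi> h ^^ (j * e)) y2" for i j y1 y2
    proof -
      have je: "j * e = i * e + (j - i) * e" using ij by (simp add: algebra_simps)
      have "(\<phi> h ^^ (j * e)) y2 = (\<phi> h ^^ (i * e)) ((\<phi> h ^^ ((j - i) * e)) y2)"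
        unfolding je funpow_add by simp
      then have "y1 = (\<phi> h ^^ ((j - i) * e)) y2" using eq injh by (metis injD)
      moreover have "(j - i) * e \<ge> n1" using ij unfolding e_def
        by (metis Suc_le_eq le_trans mult_le_cancel2 mult_1 nat_le_linear zero_less_diff le_SucI Suc_leI
            nat_mult_le_cancel_disj not_less)
      ultimately have "y1 \<in> U" using n1 y(2) by blast
      then show False using y(1) by blast
    qed
    define C where "C = {z \<in> N. \<phi> z x \<in> U}"
    define D where "D = {z \<in> N. \<phi> z x \<notin> U}"
    have 1: "C \<union> D = N" "C \<inter> D = {}" unfolding C_def D_def by auto
    have 2: "\<forall>f\<in>F. \<forall>c\<in>C. f \<otimes>\<^bsub>G\<^esub> c \<notin> C"
    proof (intro ballI)
      fix f c assume f: "f \<in> F" and cC: "c \<in> C"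
      have fc: "f \<in> carrier G" "c \<in> carrier G" using f F' cC Nc unfolding C_def by auto
      have "\<phi> (f \<otimes>\<^bsub>G\<^esub> c) x = \<phi> f (\<phi> c x)" by (rule act_comp[OF ha fc])
      then show "f \<otimes>\<^bsub>G\<^esub> c \<notin> C" using Udisj[OF f] cC unfolding C_def by auto
    qed
    have 3: "\<forall>i\<in>{1..k}. \<forall>j\<in>{1..k}. i \<noteq> j \<longrightarrow> (\<forall>d1\<in>D. \<forall>d2\<in>D. \<gamma> i \<otimes>\<^bsub>G\<^esub> d1 \<noteq> \<gamma> j \<otimes>\<^bsub>G\<^esub> d2)"
    proof (intro ballI impI)
      fix i j :: nat and d1 d2 assume ij: "i \<noteq> j" and d: "d1 \<in> D" "d2 \<in> D"
      have dc: "d1 \<in> carrier G" "d2 \<in> carrier G" using d Nc unfolding D_def by auto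
      have y: "\<phi> d1 x \<notin> U" "\<phi> d2 x \<notin> U" using d unfolding D_def by auto
      show "\<gamma> i \<otimes>\<^bsub>G\<^esub> d1 \<noteq> \<gamma> j \<otimes>\<^bsub>G\<^esub> d2"
      proof
        assume "\<gamma> i \<otimes>\<^bsub>G\<^esub> d1 = \<gamma> j \<otimes>\<^bsub>G\<^esub> d2"
        then have "\<phi> (\<gamma> i \<otimes>\<^bsub>G\<^esub> d1) x = \<phi> (\<gamma> j \<otimes>\<^bsub>G\<^esub> d2) x" by simp
        then have E: "(\<phi> h ^^ (i * e)) (\<phi> d1 x) = (\<phi> h ^^ (j * e)) (\<phi> d2 x)"
          using act_comp[OF ha \<gamma>c dc(1)] act_comp[OF ha \<gamma>c dc(2)] phiga by simp
        show False
        proof (cases "i < j")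
          case True show False by (rule key[OF True y E])
        next
          case False then have "j < i" using ij by simp
          then show False using key[OF _ y(2) y(1) E[symmetric]] by blast
        qed
      qed
    qed
    show ?thesis using 1 2 3 \<gamma>N by blast
  qed
  show ?thesis unfolding powers_group_def
  proof (intro conjI allI impI)
    show "carrier (G\<lparr>carrier := N\<rparr>) \<noteq> {\<one>\<^bsub>G\<lparr>carrier := N\<rparr>\<^esub>}" using nontriv by simp
    fix F and k :: nat
    assume F: "finite F" "F \<subseteq> carrier (G\<lparr>carrier := N\<rparr>) - {\<one>\<^bsub>G\<lparr>carrier := N\<rparr>\<^esub>}" "1 \<le> k"
    then have F2: "F \<subseteq> N - {\<one>\<^bsub>G\<^esub>}" by simp
    obtain C D and \<gamma> :: "nat \<Rightarrow> 'g" where W: "C \<union> D = N" "C \<inter> D = {}"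
          "\<forall>f\<in>F. \<forall>c\<in>C. f \<otimes>\<^bsub>G\<^esub> c \<notin> C"
          "\<forall>i\<in>{1..k}. \<gamma> i \<in> N"
          "\<forall>i\<in>{1..k}. \<forall>j\<in>{1..k}. i \<noteq> j \<longrightarrow> (\<forall>d1\<in>D. \<forall>d2\<in>D. \<gamma> i \<otimes>\<^bsub>G\<^esub> d1 \<noteq> \<gamma> j \<otimes>\<^bsub>G\<^esub> d2)"
      using main[OF F(1) F2, of k] by blast
    show "\<exists>C D (\<gamma>::nat \<Rightarrow> 'g). C \<union> D = carrier (G\<lparr>carrier := N\<rparr>) \<and> C \<inter> D = {} \<and>
          (\<forall>f\<in>F. (f <#\<^bsub>G\<lparr>carrier := N\<rparr>\<^esub> C) \<inter> C = {}) \<and>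
          (\<forall>i\<in>{1..k}. \<gamma> i \<in> carrier (G\<lparr>carrier := N\<rparr>)) \<and>
          (\<forall>i\<in>{1..k}. \<forall>j\<in>{1..k}. i \<noteq> j \<longrightarrow>
             (\<gamma> i <#\<^bsub>G\<lparr>carrier := N\<rparr>\<^esub> D) \<inter> (\<gamma> j <#\<^bsub>G\<lparr>carrier := N\<rparr>\<^esub> D) = {})"
    proof (intro exI conjI)
      show "C \<union> D = carrier (G\<lparr>carrier := N\<rparr>)" using W(1) by simp
      show "C \<inter> D = {}" by (rule W(2))
      show "\<forall>f\<in>F. (f <#\<^bsub>G\<lparr>carrier := N\<rparr>\<^esub> C) \<inter> C = {}"
        using W(3) unfolding l_coset_def by auto
      show "\<forall>i\<in>{1..k}. \<gamma> i \<in> carrier (G\<lparr>carrier := N\<rparr>)" using W(4) by simp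
      show "\<forall>i\<in>{1..k}. \<forall>j\<in>{1..k}. i \<noteq> j \<longrightarrow>
             (\<gamma> i <#\<^bsub>G\<lparr>carrier := N\<rparr>\<^esub> D) \<inter> (\<gamma> j <#\<^bsub>G\<lparr>carrier := N\<rparr>\<^esub> D) = {}"
        using W(5) unfolding l_coset_def by fastforce
    qed
  qed
qed

theorem proposition7p1:
  fixes G :: "('g, 'm) monoid_scheme" and \<phi> :: "'g \<Rightarrow> 'a::t2_space \<Rightarrow> 'a"
  assumes "group G"
    and "homeo_action G \<phi>"
    and "strongly_hyperbolic G \<phi>"
    and "strongly_faithful_on G \<phi> (limset (\<phi> ` carrier G))"
  shows "(\<forall>C. closed C \<longrightarrow> C \<noteq> {} \<longrightarrow> (\<forall>g\<in>carrier G. \<phi> g ` C \<subseteq> C) \<longrightarrow>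
            closure (limset (\<phi> ` carrier G)) \<subseteq> C)
       \<and> (\<forall>N. N \<lhd> G \<longrightarrow> (\<exists>n\<in>N. hyperbolic (\<phi> n)) \<longrightarrow>
            closure (limset (\<phi> ` N)) = closure (limset (\<phi> ` carrier G))
            \<and> powers_group (G\<lparr>carrier := N\<rparr>))"
proof (intro conjI allI impI)
  fix C :: "'a set" assume "closed C" "C \<noteq> {}" "\<forall>g\<in>carrier G. \<phi> g ` C \<subseteq> C"
  then show "closure (limset (\<phi> ` carrier G)) \<subseteq> C" using part_i[OF assms(1-3)] by blast
next
  fix N assume N: "N \<lhd> G" "\<exists>n\<in>N. hyperbolic (\<phi> n)"
  then obtain n0 where n0: "n0 \<in> N" "hyperbolic (\<phi> n0)" by blast
  show "closure (limset (\<phi> ` N)) = closure (limset (\<phi> ` carrier G))"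
    by (rule part_ii[OF assms(1-3) N(1) n0])
  show "powers_group (G\<lparr>carrier := N\<rparr>)"
    by (rule part_iii[OF assms N(1) n0])
qed

end
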